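(* For every $\bm U\in\mathbb V_h$, $|\bm U|_{1,h}\le\frac{\pi}{2}\|\nabla_h\bm U\|_h$.
   Context: $\Omega=[x_L,x_R]\times[y_L,y_R]$, $l_1=x_R-x_L$, $l_2=y_R-y_L$, $N_1,N_2$ even, $h_r=l_r/N_r$, grid points $x_{j_1}=x_L+j_1h_1$, $y_{j_2}=y_L+j_2h_2$, $0\le j_r\le N_r-1$. $\mathbb V_h$: doubly periodic grid functions identified with vectors $\bm U=(U_{0,0},U_{1,0},\dots,U_{N_1-1,0},U_{0,1},\dots,U_{N_1-1,N_2-1})^T$. $\langle\bm U,\bm V\rangle_h=h_1h_2\sum_{j_1,j_2}U_{j_1,j_2}V_{j_1,j_2}$, $\|\bm U\|_h^2=\langle\bm U,\bm U\rangle_h$. $\delta_x^+U_{j_1,j_2}=(U_{j_1+1,j_2}-U_{j_1,j_2})/h_1$, $\delta_y^+U_{j_1,j_2}=(U_{j_1,j_2+1}-U_{j_1,j_2})/h_2$, $\|\nabla_h\bm U\|_h^2=\|\delta_x^+\bm U\|_h^2+\|\delta_y^+\bm U\|_h^2$. With $\mu_r=2\pi/l_r$, $g^{(1)}_k(x)=\frac1{N_1}\sum_{l=-N_1/2}^{N_1/2}\frac1{a_l}e^{\mathrm il\mu_1(x-x_k)}$, $a_l=1$ for $|l|<N_1/2$, $a_{\pm N_1/2}=2$ (similarly $g^{(2)}_k(y)$), $\bm D_1^x=((g^{(1)}_k)'(x_j))_{j,k=0}^{N_1-1}$, $\bm D_1^y=((g^{(2)}_k)'(y_j))_{j,k=0}^{N_2-1}$,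 and $|\bm U|_{1,h}^2=\langle-(\bm I_{N_2}\otimes(\bm D_1^x)^2+(\bm D_1^y)^2\otimes\bm I_{N_1})\bm U,\bm U\rangle_h$ ($\otimes$ Kronecker product). *)

theory Defs
  imports "HOL-Analysis.Analysis"
begin

definition grid_pt :: "real \<Rightarrow> real \<Rightarrow> nat \<Rightarrow> nat \<Rightarrow> real" where
  "grid_pt lo hi N j = lo + real j * ((hi - lo) / real N)"

definition a_coef :: "nat \<Rightarrow> int \<Rightarrow> real" where
  "a_coef N l = (if \<bar>l\<bar> = int N div 2 then 2 else 1)"

definition gbasis :: "real \<Rightarrow> real \<Rightarrow> nat \<Rightarrow> nat \<Rightarrow> real \<Rightarrow> complex" where
  "gbasis lo hi N k x =
     (1 / of_nat N) * (\<Sum>l\<in>{-(int N div 2)..int N div 2}.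
        complex_of_real (1 / a_coef N l) *
        exp (\<i> * of_int l * complex_of_real (2 * pi / (hi - lo)) * complex_of_real (x - grid_pt lo hi N k)))"

definition Dmat :: "real \<Rightarrow> real \<Rightarrow> nat \<Rightarrow> nat \<Rightarrow> nat \<Rightarrow> complex" where
  "Dmat lo hi N j k = vector_derivative (gbasis lo hi N k) (at (grid_pt lo hi N j))"

definition D2mat :: "real \<Rightarrow> real \<Rightarrow> nat \<Rightarrow> nat \<Rightarrow> nat \<Rightarrow> complex" where
  "D2mat lo hi N j k = (\<Sum>m<N. Dmat lo hi N j m * Dmat lo hi N m k)"

text \<open>Grid functions are U :: nat => nat => real, only values at 0 <= j1 < N1, 0 <= j2 < N2 matter;
  periodicity is realized by indices mod N.\<close>

definition inner_h :: "real \<Rightarrow> real \<Rightarrow> nat \<Rightarrow> real \<Rightarrow> real \<Rightarrow> nat \<Rightarrow>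
    (nat \<Rightarrow> nat \<Rightarrow> real) \<Rightarrow> (nat \<Rightarrow> nat \<Rightarrow> real) \<Rightarrow> real" where
  "inner_h xL xR N1 yL yR N2 U V =
     ((xR - xL) / real N1) * ((yR - yL) / real N2) *
     (\<Sum>j1<N1. \<Sum>j2<N2. U j1 j2 * V j1 j2)"

definition dxp :: "real \<Rightarrow> real \<Rightarrow> nat \<Rightarrow> nat \<Rightarrow> (nat \<Rightarrow> nat \<Rightarrow> real) \<Rightarrow> nat \<Rightarrow> nat \<Rightarrow> real" where
  "dxp xL xR N1 N2 U j1 j2 = (U ((j1 + 1) mod N1) (j2 mod N2) - U (j1 mod N1) (j2 mod N2)) / ((xR - xL) / real N1)"

definition dyp :: "real \<Rightarrow> real \<Rightarrow> nat \<Rightarrow> nat \<Rightarrow> (nat \<Rightarrow> nat \<Rightarrow> real) \<Rightarrow> nat \<Rightarrow> nat \<Rightarrow> real" where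
  "dyp yL yR N1 N2 U j1 j2 = (U (j1 mod N1) ((j2 + 1) mod N2) - U (j1 mod N1) (j2 mod N2)) / ((yR - yL) / real N2)"

definition grad_norm_sq :: "real \<Rightarrow> real \<Rightarrow> nat \<Rightarrow> real \<Rightarrow> real \<Rightarrow> nat \<Rightarrow> (nat \<Rightarrow> nat \<Rightarrow> real) \<Rightarrow> real" where
  "grad_norm_sq xL xR N1 yL yR N2 U =
     inner_h xL xR N1 yL yR N2 (dxp xL xR N1 N2 U) (dxp xL xR N1 N2 U) +
     inner_h xL xR N1 yL yR N2 (dyp yL yR N1 N2 U) (dyp yL yR N1 N2 U)"

text \<open>|U|_{1,h}^2 = < -(I_{N2} (x) (D^x)^2 + (D^y)^2 (x) I_{N1}) U, U >_h, with U ordered so that j1 runs fastest;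
  hence ((I (x) A) U)_{j1,j2} = sum_k A_{j1 k} U_{k j2} and ((B (x) I) U)_{j1,j2} = sum_k B_{j2 k} U_{j1 k}.
  The value is real; we take the real part of the complex expression.\<close>
definition semi1_sq :: "real \<Rightarrow> real \<Rightarrow> nat \<Rightarrow> real \<Rightarrow> real \<Rightarrow> nat \<Rightarrow> (nat \<Rightarrow> nat \<Rightarrow> real) \<Rightarrow> real" where
  "semi1_sq xL xR N1 yL yR N2 U =
     Re (complex_of_real (((xR - xL) / real N1) * ((yR - yL) / real N2)) *
       (\<Sum>j1<N1. \<Sum>j2<N2.
          - ((\<Sum>k<N1. D2mat xL xR N1 j1 k * complex_of_real (U k j2)) +
             (\<Sum>k<N2. D2mat yL yR N2 j2 k * complex_of_real (U j1 k)))
          * complex_of_real (U j1 j2)))"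

end

theory Submission
  imports Defs
begin


definition EE :: "nat \<Rightarrow> int \<Rightarrow> complex" where
  "EE N t = exp (2 * pi * \<i> * of_int t / of_nat N)"

lemma EE_add: "EE N (a + b) = EE N a * EE N b"
  by (simp add: EE_def exp_add[symmetric] add_divide_distrib distrib_left)

lemma EE_0[simp]: "EE N 0 = 1" by (simp add: EE_def)

lemma EE_minus: "EE N (- a) = cnj (EE N a)"
  by (simp add: EE_def exp_cnj)

lemma EE_norm[simp]: "norm (EE N a) = 1"
  by (simp add: EE_def norm_exp_eq_Re)

lemma EE_mult_N: assumes "N > 0" shows "EE N (int N * t) = 1"
proof -
  have "EE N (int N * t) = exp ((2 * complex_of_int t * pi) * \<i>)"
    using assms by (simp add: EE_def field_simps)
  also have "\<dots> = 1" by (subst exp_eq_1) (auto intro!: exI[of _ t])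
  finally show ?thesis .
qed

lemma EE_dvd: assumes "N > 0" "int N dvd t" shows "EE N t = 1"
  using assms EE_mult_N by (auto elim!: dvdE)

lemma EE_pow: "EE N (t * int m) = EE N t ^ m"
proof -
  have "EE N (t * int m) = exp (of_nat m * (2 * pi * \<i> * of_int t / of_nat N))"
    by (simp add: EE_def field_simps)
  then show ?thesis by (simp only: exp_of_nat_mult EE_def)
qed

lemma EE_eq_1: assumes "N > 0" "EE N t = 1" shows "int N dvd t"
proof -
  from assms(2) have "exp (2 * pi * \<i> * of_int t / of_nat N) = 1" by (simp add: EE_def)
  then obtain n :: int where n: "Im (2 * pi * \<i> * of_int t / of_nat N) = of_int (2 * n) * pi"
    by (auto simp: exp_eq_1)
  then have "2 * pi * real_of_int t / real N = 2 * real_of_int n * pi" by simp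
  then have "real_of_int t = real_of_int n * real N" using assms(1) pi_gt_zero
    by (simp add: field_simps)
  then have "t = n * int N" by (metis of_int_eq_iff of_int_mult of_int_of_nat_eq)
  then show ?thesis by simp
qed

lemma EE_geom: assumes "N > 0"
  shows "(\<Sum>m<N. EE N (t * int m)) = (if int N dvd t then of_nat N else 0)"
proof (cases "int N dvd t")
  case True
  then have "\<And>m. EE N (t * int m) = 1" using assms by (intro EE_dvd) auto
  then show ?thesis using True by simp
next
  case False
  then have ne: "EE N t \<noteq> 1" using EE_eq_1 assms by blast
  have "(\<Sum>m<N. EE N (t * int m)) = (\<Sum>m<N. EE N t ^ m)" by (simp add: EE_pow)
  also have "\<dots> = (EE N t ^ N - 1) / (EE N t - 1)" by (rule geometric_sum[OF ne])
  also have "EE N t ^ N = 1" using EE_pow[of N t N] EE_mult_N[OF assms, of t] by (simp add: mult.commute)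
  finally show ?thesis using False by simp
qed

lemma EE_shift_sum: assumes "N > 0"
  shows "(\<Sum>l\<in>{a..<a + int N}. EE N (l * t)) = (if int N dvd t then of_nat N else 0)"
proof -
  have "(\<Sum>l\<in>{a..<a + int N}. EE N (l * t)) = (\<Sum>m<N. EE N ((a + int m) * t))"
  proof (rule sum.reindex_bij_witness[where i="\<lambda>l. a + int l" and j="\<lambda>l. nat (l - a)"])
  qed auto
  also have "\<dots> = EE N (a * t) * (\<Sum>m<N. EE N (t * int m))"
    unfolding sum_distrib_left
  proof (intro sum.cong refl)
    fix m show "EE N ((a + int m) * t) = EE N (a * t) * EE N (t * int m)"
      by (subst EE_add[symmetric]) (simp add: algebra_simps)
  qed
  also have "\<dots> = (if int N dvd t then of_nat N else 0)"
    using EE_geom[OF assms] EE_dvd[OF assms, of "a*t"] by auto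
  finally show ?thesis .
qed

lemma jordan:
  fixes a :: real assumes "0 \<le> a" "a \<le> pi/2"
  shows "2 / pi * a \<le> sin a"
proof -
  have cv: "convex_on {0..pi} (\<lambda>x. - sin x)"
    by (rule f''_ge0_imp_convex[where f'="\<lambda>x. - cos x" and f''="\<lambda>x. sin x"])
       (auto intro!: derivative_eq_intros sin_ge_zero)
  define t where "t = 2 / pi * a"
  have t: "0 \<le> t" "t \<le> 1" using assms pi_gt_zero by (auto simp: t_def field_simps)
  have "- sin ((1 - t) *\<^sub>R 0 + t *\<^sub>R (pi/2)) \<le> (1 - t) * (- sin 0) + t * (- sin (pi/2))"
    by (rule convex_onD[OF cv]) (use t pi_gt_zero in auto)
  moreover have "(1 - t) *\<^sub>R 0 + t *\<^sub>R (pi/2) = a" using pi_gt_zero by (simp add: t_def)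
  ultimately show ?thesis by (simp add: t_def)
qed

lemma gb_deriv:
  "((gbasis lo hi N k) has_vector_derivative
     ((1 / of_nat N) * (\<Sum>l\<in>{-(int N div 2)..int N div 2}.
        complex_of_real (1 / a_coef N l) *
        (\<i> * of_int l * complex_of_real (2 * pi / (hi - lo)) *
        exp (\<i> * of_int l * complex_of_real (2 * pi / (hi - lo)) * complex_of_real (x - grid_pt lo hi N k)))))) (at x)"
proof -
  have "((\<lambda>z. (1 / of_nat N) * (\<Sum>l\<in>{-(int N div 2)..int N div 2}.
        complex_of_real (1 / a_coef N l) *
        exp (\<i> * of_int l * complex_of_real (2 * pi / (hi - lo)) * (z - complex_of_real (grid_pt lo hi N k)))))
     has_field_derivative ((1 / of_nat N) * (\<Sum>l\<in>{-(int N div 2)..int N div 2}.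
        complex_of_real (1 / a_coef N l) *
        (\<i> * of_int l * complex_of_real (2 * pi / (hi - lo)) *
        exp (\<i> * of_int l * complex_of_real (2 * pi / (hi - lo)) * complex_of_real (x - grid_pt lo hi N k)))))) (at (of_real x))"
    apply (rule derivative_eq_intros refl)+
    apply (simp only: mult_zero_left add_0_left diff_zero mult_1_left)
    apply (simp add: mult.commute)
    done
  from has_vector_derivative_real_field[OF this] show ?thesis
    by (simp add: gbasis_def[abs_def])
qed

lemma exp_grid: assumes "lo < hi" "N > 0"
  shows "exp (\<i> * of_int l * complex_of_real (2 * pi / (hi - lo)) *
     complex_of_real (grid_pt lo hi N j - grid_pt lo hi N k)) = EE N (l * (int j - int k))"
proof -
  have "grid_pt lo hi N j - grid_pt lo hi N k = (real j - real k) * ((hi - lo) / real N)"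
    by (simp add: grid_pt_def left_diff_distrib diff_divide_distrib)
  then have g: "complex_of_real (grid_pt lo hi N j - grid_pt lo hi N k) = of_int (int j - int k) * (of_real (hi - lo) / of_nat N)"
    by simp
  have L: "complex_of_real (hi - lo) \<noteq> 0" using assms by simp
  have "\<i> * of_int l * complex_of_real (2 * pi / (hi - lo)) *
     complex_of_real (grid_pt lo hi N j - grid_pt lo hi N k) = 2 * pi * \<i> * of_int (l * (int j - int k)) / of_nat N"
    unfolding g using L assms(2) by (simp add: field_simps del: of_real_diff)
  then show ?thesis by (simp add: EE_def)
qed

lemma Dmat_eq: assumes "lo < hi" "even N" "N > 0"
  shows "Dmat lo hi N j k = (1 / of_nat N) * (\<Sum>l\<in>{-(int N div 2)<..<int N div 2}.
     \<i> * of_int l * complex_of_real (2*pi/(hi-lo)) * EE N (l * (int j - int k)))"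
proof -
  define M where "M = int N div 2"
  define mu where "mu = complex_of_real (2*pi/(hi-lo))"
  define d where "d = int j - int k"
  have NM: "int N = 2 * M" using assms(2) by (simp add: M_def)
  have M0: "M > 0" using assms NM by simp
  have "Dmat lo hi N j k = (1 / of_nat N) * (\<Sum>l\<in>{-M..M}.
        complex_of_real (1 / a_coef N l) * (\<i> * of_int l * mu * EE N (l * d)))"
    unfolding Dmat_def M_def mu_def d_def
    by (subst vector_derivative_at[OF gb_deriv]) (simp only: exp_grid[OF assms(1) assms(3)])
  also have "{-M..M} = insert (-M) (insert M {-M<..<M})" using M0 by auto
  also have "(\<Sum>l\<in>insert (-M) (insert M {-M<..<M}).
        complex_of_real (1 / a_coef N l) * (\<i> * of_int l * mu * EE N (l * d))) =
      complex_of_real (1/2) * (\<i> * of_int (-M) * mu * EE N (-M * d)) +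
      (complex_of_real (1/2) * (\<i> * of_int M * mu * EE N (M * d)) +
      (\<Sum>l\<in>{-M<..<M}. \<i> * of_int l * mu * EE N (l * d)))"
    using M0 by (auto simp add: a_coef_def M_def[symmetric] intro!: sum.cong)
  also have "EE N (-M * d) = EE N (M * d)"
  proof -
    have "EE N (-M * d) = EE N (-M * d) * EE N (int N * d)" using EE_mult_N[OF assms(3)] by simp
    also have "\<dots> = EE N (M * d)" by (subst EE_add[symmetric]) (simp add: NM algebra_simps)
    finally show ?thesis .
  qed
  finally show ?thesis by (simp add: mu_def d_def M_def algebra_simps)
qed


lemma EE_split: "EE N (l * (int j - int m)) * EE N (l' * (int m - int k)) = EE N (l * int j - l' * int k) * EE N ((l' - l) * int m)"
  by (simp add: EE_add[symmetric] algebra_simps)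

lemma prod2: fixes c :: complex shows "(c * sum f S) * (c * sum g T) = (\<Sum>l\<in>S. \<Sum>l'\<in>T. (c * f l) * (c * g l'))"
proof -
  have "(c * sum f S) * (c * sum g T) = (\<Sum>l\<in>S. c * f l) * (\<Sum>l'\<in>T. c * g l')"
    by (simp only: sum_distrib_left)
  also have "\<dots> = (\<Sum>l\<in>S. \<Sum>l'\<in>T. (c * f l) * (c * g l'))" by (rule sum_product)
  finally show ?thesis .
qed

lemma D2_term: "(c * (A * EE N (l * (int j - int m)))) * (c * (B * EE N (l' * (int m - int k))))
      = c^2 * (A * B * EE N (l * int j - l' * int k)) * EE N ((l' - l) * int m)"
proof -
  have "(c * (A * EE N (l * (int j - int m)))) * (c * (B * EE N (l' * (int m - int k))))
      = (c * c) * (A * B) * (EE N (l * (int j - int m)) * EE N (l' * (int m - int k)))"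
    by (simp only: mult_ac)
  also have "\<dots> = (c * c) * (A * B) * (EE N (l * int j - l' * int k) * EE N ((l' - l) * int m))"
    by (simp only: EE_split)
  also have "\<dots> = c^2 * (A * B * EE N (l * int j - l' * int k)) * EE N ((l' - l) * int m)"
    by (simp only: mult_ac power2_eq_square)
  finally show ?thesis .
qed

lemma D2mat_eq: assumes "lo < hi" "even N" "N > 0"
  shows "D2mat lo hi N j k = (1 / of_nat N) * (\<Sum>l\<in>{-(int N div 2)<..<int N div 2}.
     (\<i> * of_int l * complex_of_real (2*pi/(hi-lo)))^2 * EE N (l * (int j - int k)))"
proof -
  define S where "S = {-(int N div 2)<..<int N div 2}"
  define a where "a l = \<i> * of_int l * complex_of_real (2*pi/(hi-lo))" for l
  have fS: "finite S" by (simp add: S_def)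
  have "D2mat lo hi N j k = (\<Sum>m<N. ((1 / of_nat N) * (\<Sum>l\<in>S. a l * EE N (l * (int j - int m)))) *
      ((1 / of_nat N) * (\<Sum>l'\<in>S. a l' * EE N (l' * (int m - int k)))))"
    by (simp add: D2mat_def Dmat_eq[OF assms] S_def a_def)
  also have "\<dots> = (\<Sum>m<N. \<Sum>l\<in>S. \<Sum>l'\<in>S. (1 / of_nat N)^2 * (a l * a l' * EE N (l * int j - l' * int k)) * EE N ((l' - l) * int m))"
    unfolding prod2 by (intro sum.cong refl) (rule D2_term)
  also have "\<dots> = (\<Sum>l\<in>S. \<Sum>l'\<in>S. (1 / of_nat N)^2 * (a l * a l' * EE N (l * int j - l' * int k)) * (\<Sum>m<N. EE N ((l' - l) * int m)))"
    by (simp add: sum_distrib_left sum.swap[of _ "{..<N}"])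
  also have "\<dots> = (\<Sum>l\<in>S. \<Sum>l'\<in>S. if l' = l then (1 / of_nat N)^2 * (a l * a l' * EE N (l * int j - l' * int k)) * of_nat N else 0)"
  proof (intro sum.cong refl)
    fix l l' assume "l \<in> S" "l' \<in> S"
    have "int N dvd (l' - l) \<longleftrightarrow> l' = l"
    proof
      assume d: "int N dvd (l' - l)"
      have "\<bar>l' - l\<bar> < int N" using \<open>l \<in> S\<close> \<open>l' \<in> S\<close> assms(2) unfolding S_def by (auto elim!: evenE)
      then show "l' = l" using dvd_imp_le_int[OF _ d] by force
    qed simp
    then show "(1 / of_nat N)^2 * (a l * a l' * EE N (l * int j - l' * int k)) * (\<Sum>m<N. EE N ((l' - l) * int m)) =
      (if l' = l then (1 / of_nat N)^2 * (a l * a l' * EE N (l * int j - l' * int k)) * of_nat N else 0)"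
      using EE_geom[OF assms(3), of "l' - l"] by simp
  qed
  also have "\<dots> = (\<Sum>l\<in>S. (1 / of_nat N)^2 * (a l * a l * EE N (l * int j - l * int k)) * of_nat N)"
    using fS by (simp add: sum.delta')
  also have "\<dots> = (1 / of_nat N) * (\<Sum>l\<in>S. (a l)^2 * EE N (l * (int j - int k)))"
    using assms(3) by (simp add: sum_distrib_left power2_eq_square algebra_simps)
  finally show ?thesis by (simp add: S_def a_def)
qed


definition FF :: "nat \<Rightarrow> (nat \<Rightarrow> real) \<Rightarrow> int \<Rightarrow> complex" where
  "FF N u l = (\<Sum>k<N. complex_of_real (u k) * EE N (- (l * int k)))"

lemma cnj_FF: "cnj (FF N u l) = (\<Sum>k<N. complex_of_real (u k) * EE N (l * int k))"
proof -
  have "cnj (EE N (- (l * int k))) = EE N (l * int k)" for k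
    using EE_minus[of N "- (l * int k)"] by simp
  then show ?thesis by (simp add: FF_def)
qed

lemma qf_eq: assumes "lo < hi" "even N" "N > 0"
  shows "(\<Sum>j<N. (\<Sum>k<N. D2mat lo hi N j k * complex_of_real (u k)) * complex_of_real (u j)) =
    - complex_of_real ((1 / real N) * (\<Sum>l\<in>{-(int N div 2)<..<int N div 2}.
        (real_of_int l * (2*pi/(hi-lo)))^2 * (norm (FF N u l))^2))"
proof -
  define S where "S = {-(int N div 2)<..<int N div 2}"
  define b where "b l = (\<i> * of_int l * complex_of_real (2*pi/(hi-lo)))^2" for l
  have "(\<Sum>j<N. (\<Sum>k<N. D2mat lo hi N j k * complex_of_real (u k)) * complex_of_real (u j)) =
     (\<Sum>j<N. \<Sum>k<N. \<Sum>l\<in>S. (1 / of_nat N) * b l * ((complex_of_real (u j) * EE N (l * int j)) * (complex_of_real (u k) * EE N (- (l * int k)))))"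
    unfolding D2mat_eq[OF assms] S_def[symmetric] b_def[symmetric] sum_distrib_left sum_distrib_right
    by (intro sum.cong refl) (simp add: EE_add[symmetric] algebra_simps)
  also have "\<dots> = (\<Sum>l\<in>S. (1 / of_nat N) * b l * ((\<Sum>j<N. complex_of_real (u j) * EE N (l * int j)) * (\<Sum>k<N. complex_of_real (u k) * EE N (- (l * int k)))))"
    apply (simp only: sum_product sum_distrib_left sum_distrib_right sum.swap[where B=S])
    apply (rule sum.cong[OF refl])
    apply (rule sum.swap)
    done
  also have "\<dots> = (\<Sum>l\<in>S. (1 / of_nat N) * b l * complex_of_real ((norm (FF N u l))^2))"
    unfolding cnj_FF[symmetric] FF_def[symmetric] complex_norm_square by (simp add: mult.commute)
  also have "\<dots> = - complex_of_real ((1 / real N) * (\<Sum>l\<in>S. (real_of_int l * (2*pi/(hi-lo)))^2 * (norm (FF N u l))^2))"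
  proof -
    have bl: "b l = - complex_of_real ((real_of_int l * (2*pi/(hi-lo)))^2)" for l
      unfolding b_def mult.assoc power_mult_distrib by simp
    show ?thesis by (simp add: bl sum_distrib_left sum_negf[symmetric] del: of_real_power)
  qed
  finally show ?thesis by (simp add: S_def)
qed


lemma EE_cong: assumes "N > 0" "int N dvd (a - b)" shows "EE N a = EE N b"
proof -
  have "EE N a = EE N (b + (a - b))" by simp
  also have "\<dots> = EE N b" by (simp only: EE_add EE_dvd[OF assms]) simp
  finally show ?thesis .
qed

lemma rot1: assumes "(a::nat) < N" shows "((a + 1) mod N + N - 1) mod N = a"
proof (cases "a + 1 = N")
  case True
  then have "(a + 1) mod N = 0" by (simp only: mod_self)
  then have "(a + 1) mod N + N - 1 = a" using True by linarith
  then show ?thesis using assms by (simp only: mod_less)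
next
  case False
  then have "a + 1 < N" using assms by linarith
  then have "(a + 1) mod N = a + 1" by (rule mod_less)
  then have "(a + 1) mod N + N - 1 = a + N" by linarith
  then show ?thesis using assms by (simp only: mod_add_self2 mod_less)
qed

lemma rot2: assumes "(b::nat) < N" shows "((b + N - 1) mod N + 1) mod N = b"
proof (cases "b = 0")
  case True
  then have "b + N - 1 = N - 1" by linarith
  moreover have "N - 1 < N" using assms by linarith
  ultimately have "(b + N - 1) mod N + 1 = N" using assms by (simp only: mod_less)
  then show ?thesis using True by (simp only: mod_self)
next
  case False
  then have "b + N - 1 = (b - 1) + N" using assms by linarith
  moreover have "b - 1 < N" using assms by linarith
  ultimately have "(b + N - 1) mod N = b - 1" by (simp only: mod_add_self2 mod_less)
  then have "(b + N - 1) mod N + 1 = b" using False by linarith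
  then show ?thesis using assms by (simp only: mod_less)
qed

lemma sum_rot: fixes g :: "nat \<Rightarrow> 'a::comm_monoid_add" and N :: nat assumes "N > 0"
  shows "(\<Sum>j<N. g ((j + 1) mod N)) = (\<Sum>j<N. g j)"
  apply (rule sum.reindex_bij_witness[where i="\<lambda>j. (j + N - 1) mod N" and j="\<lambda>j. (j + 1) mod N"])
  subgoal for a using rot1[of a N] by simp
  subgoal using assms by simp
  subgoal for b using rot2[of b N] by simp
  subgoal using assms by simp
  subgoal by simp
  done




lemma FF_shift: assumes "N > 0"
  shows "FF N (\<lambda>j. u ((j + 1) mod N) - u j) l = (EE N l - 1) * FF N u l"
proof -
  have e: "EE N (- (l * int j)) = EE N l * EE N (- (l * int ((j + 1) mod N)))" for j
  proof -
    have h: "int ((j + 1) mod N) = (int j + 1) mod int N" by (simp add: zmod_int add.commute)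
    have "int N dvd (int j + 1) - (int j + 1) mod int N" by (rule dvd_minus_mod)
    then have "int N dvd (int ((j + 1) mod N) - (int j + 1))" using h by (metis dvd_diff_commute)
    then have "int N dvd l * (int ((j + 1) mod N) - (int j + 1))" by (rule dvd_mult)
    moreover have "- (l * int j) - (l + - (l * int ((j + 1) mod N))) = l * (int ((j + 1) mod N) - (int j + 1))"
      by (simp add: algebra_simps)
    ultimately have "int N dvd (- (l * int j) - (l + - (l * int ((j + 1) mod N))))" by simp
    then have "EE N (- (l * int j)) = EE N (l + - (l * int ((j + 1) mod N)))" by (rule EE_cong[OF assms])
    then show ?thesis by (simp only: EE_add)
  qed
  have "FF N (\<lambda>j. u ((j + 1) mod N) - u j) l =
     (\<Sum>j<N. complex_of_real (u ((j + 1) mod N)) * EE N (- (l * int j))) - FF N u l"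
    by (simp add: FF_def algebra_simps sum_subtractf)
  also have "(\<Sum>j<N. complex_of_real (u ((j + 1) mod N)) * EE N (- (l * int j))) =
     EE N l * (\<Sum>j<N. complex_of_real (u ((j + 1) mod N)) * EE N (- (l * int ((j + 1) mod N))))"
    unfolding sum_distrib_left by (intro sum.cong refl, subst e) (simp only: mult_ac)
  also have "(\<Sum>j<N. complex_of_real (u ((j + 1) mod N)) * EE N (- (l * int ((j + 1) mod N)))) = FF N u l"
    unfolding FF_def by (rule sum_rot[OF assms, where g="\<lambda>j. complex_of_real (u j) * EE N (- (l * int j))"])
  finally show ?thesis by (simp add: algebra_simps)
qed

lemma parseval: assumes "N > 0"
  shows "(\<Sum>l\<in>{a..<a + int N}. (norm (FF N v l))^2) = real N * (\<Sum>j<N. (v j)^2)"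
proof -
  have "complex_of_real (\<Sum>l\<in>{a..<a + int N}. (norm (FF N v l))^2) =
    (\<Sum>l\<in>{a..<a + int N}. FF N v l * cnj (FF N v l))"
    by (simp only: of_real_sum complex_norm_square)
  also have "\<dots> = (\<Sum>l\<in>{a..<a + int N}. \<Sum>j<N. \<Sum>k<N. complex_of_real (v j * v k) * EE N (l * (int k - int j)))"
    unfolding cnj_FF unfolding FF_def sum_product
    by (intro sum.cong refl) (simp add: EE_add[symmetric] algebra_simps)
  also have "\<dots> = (\<Sum>j<N. \<Sum>k<N. complex_of_real (v j * v k) * (\<Sum>l\<in>{a..<a + int N}. EE N (l * (int k - int j))))"
    by (simp only: sum_distrib_left sum.swap[where A="{a..<a + int N}"])
  also have "\<dots> = (\<Sum>j<N. \<Sum>k<N. if k = j then complex_of_real (v j * v k) * of_nat N else 0)"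
  proof (intro sum.cong refl)
    fix j k assume jk: "j \<in> {..<N}" "k \<in> {..<N}"
    have "int N dvd (int k - int j) \<longleftrightarrow> k = j"
    proof
      assume d: "int N dvd (int k - int j)"
      have "\<bar>int k - int j\<bar> < int N" using jk by auto
      then show "k = j" using dvd_imp_le_int[OF _ d] by force
    qed simp
    then show "complex_of_real (v j * v k) * (\<Sum>l\<in>{a..<a + int N}. EE N (l * (int k - int j))) =
      (if k = j then complex_of_real (v j * v k) * of_nat N else 0)"
      by (simp add: EE_shift_sum[OF assms])
  qed
  also have "\<dots> = complex_of_real (real N * (\<Sum>j<N. (v j)^2))"
    by (simp add: sum_distrib_left power2_eq_square mult.commute)
  finally show ?thesis by (simp only: of_real_eq_iff)
qed

lemma norm_EE_1: "(norm (EE N l - 1))^2 = 4 * (sin (pi * real_of_int l / real N))^2"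
proof -
  define x where "x = pi * real_of_int l / real N"
  have "EE N l = cis (2 * x)" by (simp add: EE_def cis_conv_exp x_def mult_ac)
  then have "(norm (EE N l - 1))^2 = (cos (2 * x) - 1)^2 + (sin (2 * x))^2"
    by (simp add: cmod_power2)
  also have "\<dots> = 2 - 2 * cos (2 * x)"
    using sin_cos_squared_add[of "2*x"] by (simp add: power2_eq_square algebra_simps)
  also have "\<dots> = 4 * (sin x)^2" by (simp add: cos_double_sin)
  finally show ?thesis by (simp add: x_def)
qed



lemma jordan_sq: assumes "\<bar>x\<bar> \<le> pi / 2" shows "(2 / pi * x)^2 \<le> (sin x)^2"
proof -
  have "2 / pi * \<bar>x\<bar> \<le> sin \<bar>x\<bar>" using jordan[of "\<bar>x\<bar>"] assms by simp
  also have "sin \<bar>x\<bar> = \<bar>sin x\<bar>"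
  proof -
    have "0 \<le> sin \<bar>x\<bar>" using sin_ge_zero[of "\<bar>x\<bar>"] assms pi_gt_zero by simp
    moreover have "\<bar>sin \<bar>x\<bar>\<bar> = \<bar>sin x\<bar>" by (cases "x \<ge> 0") auto
    ultimately show ?thesis by simp
  qed
  finally have "\<bar>2 / pi * x\<bar> \<le> \<bar>sin x\<bar>" using pi_gt_zero by (simp add: abs_mult)
  then show ?thesis by (metis abs_ge_zero power2_abs power_mono)
qed

lemma oneD: assumes "lo < hi" "even N" "N > 0"
  shows "- Re (\<Sum>j<N. (\<Sum>k<N. D2mat lo hi N j k * complex_of_real (u k)) * complex_of_real (u j))
    \<le> (pi / 2)^2 * (\<Sum>j<N. ((u ((j + 1) mod N) - u j) / ((hi - lo) / real N))^2)"
proof -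
  define M where "M = int N div 2"
  define S where "S = {-M<..<M}"
  define T where "T = {1 - M..<(1 - M) + int N}"
  define h where "h = (hi - lo) / real N"
  define v where "v j = u ((j + 1) mod N) - u j" for j
  have NM: "int N = 2 * M" using assms(2) by (simp add: M_def)
  have h0: "h > 0" using assms by (simp add: h_def)
  have LHS: "- Re (\<Sum>j<N. (\<Sum>k<N. D2mat lo hi N j k * complex_of_real (u k)) * complex_of_real (u j))
     = (1 / real N) * (\<Sum>l\<in>S. (real_of_int l * (2*pi/(hi-lo)))^2 * (norm (FF N u l))^2)"
    unfolding qf_eq[OF assms] S_def M_def by simp
  have tm: "(real_of_int l * (2*pi/(hi-lo)))^2 \<le> (pi / h)^2 * (sin (pi * real_of_int l / real N))^2"
    if "l \<in> S" for l
  proof -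
    have "\<bar>real_of_int l\<bar> \<le> real_of_int M" using that by (auto simp: S_def)
    then have "\<bar>pi * real_of_int l / real N\<bar> \<le> pi / 2"
      using assms(3) pi_gt_zero NM by (simp add: abs_mult field_simps)
    from jordan_sq[OF this]
    have "(2 / pi * (pi * real_of_int l / real N))^2 \<le> (sin (pi * real_of_int l / real N))^2" .
    from mult_left_mono[OF this, of "(pi / h)^2"]
    have "(pi / h)^2 * (2 / pi * (pi * real_of_int l / real N))^2 \<le> (pi / h)^2 * (sin (pi * real_of_int l / real N))^2"
      by simp
    moreover have "(pi / h)^2 * (2 / pi * (pi * real_of_int l / real N))^2 = (real_of_int l * (2*pi/(hi-lo)))^2"
      using assms pi_gt_zero by (simp add: h_def power2_eq_square field_simps)
    ultimately show ?thesis by simp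
  qed
  have "(\<Sum>l\<in>S. (real_of_int l * (2*pi/(hi-lo)))^2 * (norm (FF N u l))^2)
      \<le> (\<Sum>l\<in>S. (pi / h)^2 * (sin (pi * real_of_int l / real N))^2 * (norm (FF N u l))^2)"
    by (intro sum_mono mult_right_mono tm) auto
  also have "\<dots> \<le> (\<Sum>l\<in>T. (pi / h)^2 * (sin (pi * real_of_int l / real N))^2 * (norm (FF N u l))^2)"
    by (rule sum_mono2) (auto simp: S_def T_def NM)
  also have "\<dots> = (pi / h)^2 / 4 * (\<Sum>l\<in>T. (norm (FF N v l))^2)"
  proof -
    have "(norm (FF N v l))^2 = 4 * (sin (pi * real_of_int l / real N))^2 * (norm (FF N u l))^2" for l
      unfolding v_def FF_shift[OF assms(3)] norm_mult power_mult_distrib norm_EE_1 by simp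
    then show ?thesis by (simp add: sum_distrib_left mult.assoc)
  qed
  also have "\<dots> = (pi / h)^2 / 4 * (real N * (\<Sum>j<N. (v j)^2))"
    unfolding T_def parseval[OF assms(3)] ..
  finally have "(1 / real N) * (\<Sum>l\<in>S. (real_of_int l * (2*pi/(hi-lo)))^2 * (norm (FF N u l))^2)
     \<le> (1 / real N) * ((pi / h)^2 / 4 * (real N * (\<Sum>j<N. (v j)^2)))"
    by (rule mult_left_mono) simp
  also have "\<dots> = (pi / 2)^2 * (\<Sum>j<N. (v j / h)^2)"
    using assms(3) h0 by (simp add: power_divide sum_divide_distrib[symmetric] field_simps)
  finally show ?thesis unfolding LHS by (simp add: v_def h_def)
qed



lemma semi_split:
  "semi1_sq xL xR N1 yL yR N2 U =
    ((xR - xL) / real N1) * ((yR - yL) / real N2) *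
    ((\<Sum>j2<N2. - Re (\<Sum>j1<N1. (\<Sum>k<N1. D2mat xL xR N1 j1 k * complex_of_real (U k j2)) * complex_of_real (U j1 j2))) +
     (\<Sum>j1<N1. - Re (\<Sum>j2<N2. (\<Sum>k<N2. D2mat yL yR N2 j2 k * complex_of_real (U j1 k)) * complex_of_real (U j1 j2))))"
proof -
  have "(\<Sum>j1<N1. \<Sum>j2<N2.
          - ((\<Sum>k<N1. D2mat xL xR N1 j1 k * complex_of_real (U k j2)) +
             (\<Sum>k<N2. D2mat yL yR N2 j2 k * complex_of_real (U j1 k)))
          * complex_of_real (U j1 j2)) =
      - (\<Sum>j2<N2. \<Sum>j1<N1. (\<Sum>k<N1. D2mat xL xR N1 j1 k * complex_of_real (U k j2)) * complex_of_real (U j1 j2))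
      - (\<Sum>j1<N1. \<Sum>j2<N2. (\<Sum>k<N2. D2mat yL yR N2 j2 k * complex_of_real (U j1 k)) * complex_of_real (U j1 j2))"
    by (simp add: distrib_right sum.distrib sum_negf sum_subtractf sum.swap[where A="{..<N1}"] algebra_simps)
  then show ?thesis
    by (simp add: semi1_sq_def Re_sum sum_negf)
qed

lemma main_ineq: assumes "xL < xR" and "yL < yR"
    and "even N1" and "even N2" and "N1 > 0" and "N2 > 0"
  shows "semi1_sq xL xR N1 yL yR N2 U \<le> (pi / 2)^2 * grad_norm_sq xL xR N1 yL yR N2 U"
proof -
  define hx where "hx = (xR - xL) / real N1"
  define hy where "hy = (yR - yL) / real N2"
  have hx: "hx > 0" using assms by (simp add: hx_def)
  have hy: "hy > 0" using assms by (simp add: hy_def)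
  have X: "(\<Sum>j2<N2. - Re (\<Sum>j1<N1. (\<Sum>k<N1. D2mat xL xR N1 j1 k * complex_of_real (U k j2)) * complex_of_real (U j1 j2)))
     \<le> (pi / 2)^2 * (\<Sum>j1<N1. \<Sum>j2<N2. (dxp xL xR N1 N2 U j1 j2)^2)"
  proof -
    have "(\<Sum>j2<N2. - Re (\<Sum>j1<N1. (\<Sum>k<N1. D2mat xL xR N1 j1 k * complex_of_real (U k j2)) * complex_of_real (U j1 j2)))
      \<le> (\<Sum>j2<N2. (pi / 2)^2 * (\<Sum>j1<N1. ((U ((j1 + 1) mod N1) j2 - U j1 j2) / ((xR - xL) / real N1))^2))"
    proof (rule sum_mono)
      fix j2 show "- Re (\<Sum>j1<N1. (\<Sum>k<N1. D2mat xL xR N1 j1 k * complex_of_real (U k j2)) * complex_of_real (U j1 j2))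
        \<le> (pi / 2)^2 * (\<Sum>j1<N1. ((U ((j1 + 1) mod N1) j2 - U j1 j2) / ((xR - xL) / real N1))^2)"
        using oneD[OF assms(1) assms(3) assms(5), of "\<lambda>k. U k j2"] by simp
    qed
    also have "\<dots> = (pi / 2)^2 * (\<Sum>j1<N1. \<Sum>j2<N2. (dxp xL xR N1 N2 U j1 j2)^2)"
      by (simp add: dxp_def sum_distrib_left sum.swap[where A="{..<N1}"])
    finally show ?thesis .
  qed
  have Y: "(\<Sum>j1<N1. - Re (\<Sum>j2<N2. (\<Sum>k<N2. D2mat yL yR N2 j2 k * complex_of_real (U j1 k)) * complex_of_real (U j1 j2)))
     \<le> (pi / 2)^2 * (\<Sum>j1<N1. \<Sum>j2<N2. (dyp yL yR N1 N2 U j1 j2)^2)"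
  proof -
    have "(\<Sum>j1<N1. - Re (\<Sum>j2<N2. (\<Sum>k<N2. D2mat yL yR N2 j2 k * complex_of_real (U j1 k)) * complex_of_real (U j1 j2)))
      \<le> (\<Sum>j1<N1. (pi / 2)^2 * (\<Sum>j2<N2. ((U j1 ((j2 + 1) mod N2) - U j1 j2) / ((yR - yL) / real N2))^2))"
    proof (rule sum_mono)
      fix j1 show "- Re (\<Sum>j2<N2. (\<Sum>k<N2. D2mat yL yR N2 j2 k * complex_of_real (U j1 k)) * complex_of_real (U j1 j2))
        \<le> (pi / 2)^2 * (\<Sum>j2<N2. ((U j1 ((j2 + 1) mod N2) - U j1 j2) / ((yR - yL) / real N2))^2)"
        using oneD[OF assms(2) assms(4) assms(6), of "\<lambda>k. U j1 k"] by simp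
    qed
    also have "\<dots> = (pi / 2)^2 * (\<Sum>j1<N1. \<Sum>j2<N2. (dyp yL yR N1 N2 U j1 j2)^2)"
      by (simp add: dyp_def sum_distrib_left)
    finally show ?thesis .
  qed
  have "semi1_sq xL xR N1 yL yR N2 U \<le> hx * hy * ((pi / 2)^2 * (\<Sum>j1<N1. \<Sum>j2<N2. (dxp xL xR N1 N2 U j1 j2)^2) +
       (pi / 2)^2 * (\<Sum>j1<N1. \<Sum>j2<N2. (dyp yL yR N1 N2 U j1 j2)^2))"
    unfolding semi_split hx_def[symmetric] hy_def[symmetric]
    using X Y hx hy by (intro mult_left_mono add_mono) auto
  also have "\<dots> = (pi / 2)^2 * grad_norm_sq xL xR N1 yL yR N2 U"
    by (simp add: grad_norm_sq_def inner_h_def hx_def[symmetric] hy_def[symmetric] power2_eq_square algebra_simps)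
  finally show ?thesis .
qed

theorem lemma2p4:
  fixes xL xR yL yR :: real and N1 N2 :: nat and U :: "nat \<Rightarrow> nat \<Rightarrow> real"
  assumes "xL < xR" and "yL < yR"
    and "even N1" and "even N2" and "N1 > 0" and "N2 > 0"
  shows "sqrt (semi1_sq xL xR N1 yL yR N2 U) \<le> pi / 2 * sqrt (grad_norm_sq xL xR N1 yL yR N2 U)"
proof -
  have "sqrt (semi1_sq xL xR N1 yL yR N2 U) \<le> sqrt ((pi / 2)^2 * grad_norm_sq xL xR N1 yL yR N2 U)"
    using main_ineq[OF assms] by simp
  also have "\<dots> = pi / 2 * sqrt (grad_norm_sq xL xR N1 yL yR N2 U)"
    using pi_gt_zero by (simp add: real_sqrt_mult)
  finally show ?thesis .
qed

end
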